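(* There is a constant $\eta_0<1$ such that the following holds: if $\eta>0$ and for every sufficiently large $k$ there are homogeneous polynomials $p_k,q_k$ of degree $k$ in two complex variables such that $(p_k,q_k)$ maps the unit sphere $S^3\subset\mathbb{C}^2$ into the annulus $\{w\in\mathbb{C}^2:\eta\le|w|\le1\}$ of outer radius $1$ and inner radius $\eta$, then $\eta\le\eta_0$. *)

theory Defs
  imports Complex_Main
begin

definition hom_poly2 :: "nat \<Rightarrow> (complex \<Rightarrow> complex \<Rightarrow> complex) \<Rightarrow> bool" where
  "hom_poly2 k p \<longleftrightarrow>
     (\<exists>c :: nat \<Rightarrow> complex. \<forall>z1 z2. p z1 z2 = (\<Sum>j\<le>k. c j * z1 ^ j * z2 ^ (k - j)))"

definition norm2 :: "complex \<Rightarrow> complex \<Rightarrow> real" where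
  "norm2 z1 z2 = sqrt ((cmod z1)\<^sup>2 + (cmod z2)\<^sup>2)"

end

theory Submission
  imports Defs "HOL-Complex_Analysis.Complex_Analysis" "HOL-Computational_Algebra.Fundamental_Theorem_Algebra"
begin



lemma taylor_bound:
  fixes f :: "complex \<Rightarrow> complex"
  assumes holf: "f holomorphic_on ball 0 r1" and Rr: "R < r1" and R0: "0 < R"
    and bnd: "\<And>x. norm x = R \<Longrightarrow> norm (f x) \<le> M"
    and van: "\<And>j. j < m \<Longrightarrow> (deriv ^^ j) f 0 = 0"
    and w: "norm w \<le> t * R" and t0: "0 \<le> t" and t1: "t < 1"
  shows "norm (f w) \<le> M * t^m / (1-t)"
proof -
  have wb: "w \<in> ball 0 r1" using w t1 R0 Rr
    by (simp add: mult_le_cancel_right1) (smt (verit) mult_le_cancel_right1)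
  have ser: "(\<lambda>n. (deriv ^^ n) f 0 / fact n * (w-0)^n) sums f w"
    by (rule holomorphic_power_series[OF holf wb])
  define a where "a n = (deriv ^^ n) f 0 / fact n * w^n" for n
  have ser2: "(\<lambda>n. a (n+m)) sums f w"
  proof (subst sums_zero_iff_shift)
    show "a i = 0" if "i < m" for i using van[OF that] by (simp add: a_def)
    show "(\<lambda>i. a i) sums f w" using ser by (simp add: a_def)
  qed
  have cont: "continuous_on (cball 0 R) f"
    by (rule holomorphic_on_imp_continuous_on, rule holomorphic_on_subset[OF holf]) (use Rr in auto)
  have ci: "norm ((deriv ^^ n) f 0) \<le> fact n * M / R^n" for n
    by (rule Cauchy_inequality[OF holomorphic_on_subset[OF holf] cont R0]) (use Rr bnd in auto)
  have M0: "0 \<le> M" using bnd[of "of_real R"] R0 by (smt (verit) norm_ge_zero norm_of_real)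
  have ab: "norm (a n) \<le> M * t^n" for n
  proof -
    have "norm (a n) = norm ((deriv ^^ n) f 0) / fact n * norm w ^ n"
      by (simp add: a_def norm_mult norm_divide norm_power)
    also have "\<dots> \<le> (fact n * M / R^n) / fact n * (t*R)^n"
      by (intro mult_mono divide_right_mono ci power_mono w) (use M0 R0 in auto)
    also have "\<dots> = M * t^n" using R0 by (simp add: power_mult_distrib)
    finally show ?thesis .
  qed
  have gs: "(\<lambda>n. M * t^m * t^n) sums (M * t^m / (1-t))"
    using geometric_sums[of t] t0 t1 sums_mult[of "\<lambda>n. t^n" "1/(1-t)" "M*t^m"]
    by auto
  have "norm (f w) = norm (suminf (\<lambda>n. a (n+m)))" using ser2 sums_unique by metis
  also have "\<dots> \<le> suminf (\<lambda>n. M * t^m * t^n)"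
  proof (rule norm_suminf_le)
    show "norm (a (n+m)) \<le> M * t^m * t^n" for n using ab[of "n+m"] by (simp add: power_add mult_ac)
    show "summable (\<lambda>n. M * t^m * t^n)" using gs sums_summable by blast
  qed
  also have "\<dots> = M * t^m / (1-t)" using gs sums_unique by metis
  finally show ?thesis .
qed


lemma min_modulus:
  fixes G :: "complex \<Rightarrow> complex"
  assumes holG: "G holomorphic_on ball 0 r1" and rr: "\<rho> < r1" and r0: "0 < \<rho>"
    and nz: "\<And>w. norm w \<le> \<rho> \<Longrightarrow> G w \<noteq> 0"
  shows "\<exists>w. norm w = \<rho> \<and> norm (G w) \<le> norm (G 0)"
proof (rule ccontr)
  assume H: "\<not> ?thesis"
  have sub: "cball 0 \<rho> \<subseteq> ball 0 r1" using rr by auto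
  have hol: "(\<lambda>w. inverse (G w)) holomorphic_on ball 0 \<rho>"
    using holG nz rr by (intro holomorphic_on_inverse holomorphic_on_subset[OF holG]) auto
  have contG: "continuous_on (cball 0 \<rho>) G"
    by (rule holomorphic_on_imp_continuous_on, rule holomorphic_on_subset[OF holG sub])
  have cont: "continuous_on (cball 0 \<rho>) (\<lambda>w. inverse (G w))"
    using contG nz by (intro continuous_on_inverse) auto
  have cs: "continuous_on (sphere 0 \<rho>) (\<lambda>w. norm (inverse (G w)))"
    by (intro continuous_on_norm continuous_on_subset[OF cont]) auto
  have ne: "sphere (0::complex) \<rho> \<noteq> {}" using r0 by auto
  obtain x where x: "x \<in> sphere 0 \<rho>" and xm: "\<And>y. y \<in> sphere 0 \<rho> \<Longrightarrow> norm (inverse (G y)) \<le> norm (inverse (G x))"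
    using continuous_attains_sup[OF compact_sphere ne cs] by blast
  have "norm (inverse (G 0)) \<le> norm (inverse (G x))"
  proof (rule maximum_modulus_frontier[where S="ball 0 \<rho>" and f="\<lambda>w. inverse (G w)" and \<xi>=0])
    show "(\<lambda>w. inverse (G w)) holomorphic_on interior (ball 0 \<rho>)" using hol by simp
    show "continuous_on (closure (ball 0 \<rho>)) (\<lambda>w. inverse (G w))" using cont r0 by simp
    show "bounded (ball (0::complex) \<rho>)" by simp
    show "norm (inverse (G z)) \<le> norm (inverse (G x))" if "z \<in> frontier (ball 0 \<rho>)" for z
      using that r0 xm by simp
    show "0 \<in> ball (0::complex) \<rho>" using r0 by simp
  qed
  moreover have "norm (G 0) < norm (G x)" using H x by auto
  moreover have "G 0 \<noteq> 0" using nz r0 by auto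
  ultimately have "inverse (norm (G 0)) \<le> inverse (norm (G x))" "norm (G 0) < norm (G x)" "0 < norm (G 0)"
    by (auto simp: norm_inverse)
  then show False using inverse_less_iff_less[of "norm (G x)" "norm (G 0)"] by (smt (verit))

qed


lemma unitary2:
  fixes P0 Q0 x y :: complex
  shows "(cmod (cnj P0 * x + cnj Q0 * y))^2 + (cmod (Q0 * x - P0 * y))^2
         = ((cmod P0)^2 + (cmod Q0)^2) * ((cmod x)^2 + (cmod y)^2)"
  unfolding cmod_power2 by (simp add: power2_eq_square algebra_simps)

lemma weight_id:
  fixes l0 w :: complex
  defines "a \<equiv> 1 + (cmod l0)^2"
  shows "1 + (cmod (l0 + w))^2 = a * ((cmod (1 + cnj l0 * w / of_real a))^2 + (cmod w)^2 / a^2)"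
proof -
  have a0: "a > 0" unfolding a_def by (simp add: add_pos_nonneg)
  have ae: "a = 1 + (Re l0)^2 + (Im l0)^2" unfolding a_def by (simp add: cmod_power2)
  have "1 + cnj l0 * w / of_real a = Complex (1 + (Re l0 * Re w + Im l0 * Im w)/a) ((Re l0 * Im w - Im l0 * Re w)/a)"
    using a0 by (simp add: complex_eq_iff Re_divide Im_divide power2_eq_square)
  then have e1: "(cmod (1 + cnj l0 * w / of_real a))^2 = (1 + (Re l0 * Re w + Im l0 * Im w)/a)^2 + ((Re l0 * Im w - Im l0 * Re w)/a)^2"
    by (simp add: cmod_power2)
  have e2: "(cmod (l0 + w))^2 = (Re l0 + Re w)^2 + (Im l0 + Im w)^2" by (simp add: cmod_power2)
  have e3: "(cmod w)^2 = (Re w)^2 + (Im w)^2" by (simp add: cmod_power2)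
  have k1: "(Re l0 * Re w + Im l0 * Im w)^2 + (Re l0 * Im w - Im l0 * Re w)^2 + ((Re w)^2 + (Im w)^2) = a * ((Re w)^2 + (Im w)^2)"
    unfolding ae by (simp add: power2_eq_square algebra_simps)
  have "a * ((1 + (Re l0 * Re w + Im l0 * Im w)/a)^2 + ((Re l0 * Im w - Im l0 * Re w)/a)^2 + ((Re w)^2 + (Im w)^2) / a^2)
     = a + 2 * (Re l0 * Re w + Im l0 * Im w) + ((Re l0 * Re w + Im l0 * Im w)^2 + (Re l0 * Im w - Im l0 * Re w)^2 + ((Re w)^2 + (Im w)^2)) / a"
    using a0 by (simp add: field_simps power2_eq_square)
  also have "\<dots> = a + 2 * (Re l0 * Re w + Im l0 * Im w) + ((Re w)^2 + (Im w)^2)" unfolding k1 using a0 by simp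
  also have "\<dots> = 1 + ((Re l0 + Re w)^2 + (Im l0 + Im w)^2)" unfolding ae by (simp add: power2_eq_square algebra_simps)
  finally show ?thesis unfolding e1 e2 e3 by simp
qed


lemma main_local:
  fixes P Q :: "complex \<Rightarrow> complex" and k :: nat and \<eta> :: real and l0 P1 Q1 :: complex
  assumes holP: "P holomorphic_on UNIV" and holQ: "Q holomorphic_on UNIV"
    and lowb: "\<And>z. \<eta>^2 * (1 + (cmod z)^2)^k \<le> (cmod (P z))^2 + (cmod (Q z))^2"
    and upb: "\<And>z. (cmod (P z))^2 + (cmod (Q z))^2 \<le> (1 + (cmod z)^2)^k"
    and k2: "2 \<le> k" and eta: "9999/10000 < \<eta>"
    and l0: "cmod l0 \<le> 1"
    and dP: "(P has_field_derivative P1) (at l0)" and dQ: "(Q has_field_derivative Q1) (at l0)"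
    and crit: "P l0 * Q1 = P1 * Q l0"
  shows False
proof -
  define a where "a = 1 + (cmod l0)^2"
  have a1: "1 \<le> a" and a2: "a \<le> 2" using l0 unfolding a_def by (auto simp: power_le_one)
  define P0 where "P0 = P l0"
  define Q0 where "Q0 = Q l0"
  define g0 where "g0 = sqrt ((cmod P0)^2 + (cmod Q0)^2)"
  define s where "s = sqrt (a^k)"
  have s1: "1 \<le> s" unfolding s_def using a1 by (simp add: one_le_power)
  have ss: "s^2 = a^k" unfolding s_def using a1 by simp
  have eta0: "0 < \<eta>" using eta by simp
  have g0sq: "g0^2 = (cmod P0)^2 + (cmod Q0)^2" unfolding g0_def by simp
  have g0up: "g0 \<le> s" unfolding g0_def s_def using upb[of l0] by (simp add: P0_def Q0_def a_def)
  have g0lo: "\<eta> * s \<le> g0"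
  proof -
    have "(\<eta> * s)^2 \<le> g0^2" using lowb[of l0] unfolding g0sq power_mult_distrib ss
      by (simp add: P0_def Q0_def a_def)
    then show ?thesis using real_le_rsqrt g0_def by (simp add: g0_def power2_le_iff_abs_le)
  qed
  have g0pos: "0 < g0" using g0lo mult_pos_pos[OF eta0, of s] s1 by linarith
  define A where "A z = (cnj P0 * P z + cnj Q0 * Q z) / of_real g0" for z
  define B where "B z = (Q0 * P z - P0 * Q z) / of_real g0" for z
  have AB: "(cmod (A z))^2 + (cmod (B z))^2 = (cmod (P z))^2 + (cmod (Q z))^2" for z
  proof -
    have "(cmod (A z))^2 + (cmod (B z))^2 = ((cmod (cnj P0 * P z + cnj Q0 * Q z))^2 + (cmod (Q0 * P z - P0 * Q z))^2) / g0^2"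
      unfolding A_def B_def norm_divide norm_of_real power_divide using g0pos by (simp add: add_divide_distrib)
    also have "\<dots> = (cmod (P z))^2 + (cmod (Q z))^2" unfolding unitary2 g0sq[symmetric] using g0pos by simp
    finally show ?thesis .
  qed
  define u where "u w = cnj l0 * w / of_real a" for w
  define den where "den w = (1 + u w)^k" for w
  define G where "G w = A (w + l0) / den w" for w
  define Bt where "Bt w = B (w + l0) / den w" for w
  define X where "X w = (cmod (1 + u w))^2" for w
  define R where "R = 1 / sqrt (2 * real k)"
  have kpos: "0 < real k" using k2 by simp
  have R0: "0 < R" unfolding R_def using kpos by simp
  have RR: "R^2 = 1 / (2 * real k)" unfolding R_def using kpos by (simp add: power_divide)
  have Rh: "R \<le> 1/2"
  proof -
    have "R^2 \<le> (1/2)^2" unfolding RR using k2 by (simp add: field_simps)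
    then show ?thesis using R0 by (simp add: power2_le_iff_abs_le)
  qed
  have ul: "cmod (u w) \<le> cmod w / 2" for w
  proof -
    have "2 * cmod l0 \<le> a" unfolding a_def using sum_squares_bound[of "cmod l0" 1] by (simp add: power2_eq_square)
    then have "(2 * cmod l0) * cmod w \<le> a * cmod w" by (simp add: mult_right_mono)
    then have "cmod l0 * cmod w \<le> a * cmod w / 2" by simp
    then show ?thesis unfolding u_def using a1 by (simp add: norm_mult norm_divide field_simps)
  qed
  have Xlo: "(1 - cmod w / 2)^2 \<le> X w" if "cmod w \<le> 1" for w
  proof -
    have "1 - cmod w / 2 \<le> cmod (1 + u w)"
      using ul[of w] norm_diff_ineq[of 1 "u w"] by simp
    then show ?thesis unfolding X_def using that by (intro power_mono) auto
  qed
  have Xhi: "X w \<le> (1 + cmod w / 2)^2" for w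
  proof -
    have "cmod (1 + u w) \<le> 1 + cmod w / 2" using ul[of w] norm_triangle_ineq[of 1 "u w"] by simp
    then show ?thesis unfolding X_def by (intro power_mono) auto
  qed
  have Xpos: "0 < X w" if "cmod w \<le> 1" for w
  proof -
    have "0 < 1 - cmod w / 2" using that by simp
    then have "0 < (1 - cmod w / 2)^2" by simp
    then show ?thesis using Xlo[OF that] by linarith
  qed
  have den_norm: "(cmod (den w))^2 = X w ^ k" for w
    unfolding den_def X_def by (simp add: norm_power power_mult[symmetric] mult.commute)
  have den_nz: "den w \<noteq> 0" if "cmod w \<le> 1" for w
    using Xpos[OF that] den_norm[of w] by auto
  have wid: "1 + (cmod (w + l0))^2 = a * (X w + (cmod w)^2 / a^2)" for w
    using weight_id[of l0 w] unfolding X_def u_def a_def by (simp add: add.commute)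
  have hP: "(\<lambda>w. P (w + l0)) holomorphic_on S" for S
  proof -
    have "(\<lambda>w. w + l0) holomorphic_on S" by (intro holomorphic_intros)
    moreover have "P holomorphic_on (\<lambda>w. w + l0) ` S" using holP by (rule holomorphic_on_subset) auto
    ultimately show ?thesis using holomorphic_on_compose[of "\<lambda>w. w + l0" S P] by (simp add: o_def)
  qed
  have hQ: "(\<lambda>w. Q (w + l0)) holomorphic_on S" for S
  proof -
    have "(\<lambda>w. w + l0) holomorphic_on S" by (intro holomorphic_intros)
    moreover have "Q holomorphic_on (\<lambda>w. w + l0) ` S" using holQ by (rule holomorphic_on_subset) auto
    ultimately show ?thesis using holomorphic_on_compose[of "\<lambda>w. w + l0" S Q] by (simp add: o_def)
  qed
  have hden: "den holomorphic_on S" for S unfolding den_def u_def using a1 by (intro holomorphic_intros) auto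
  have holG: "G holomorphic_on ball 0 1"
    unfolding G_def A_def using den_nz
    by (intro holomorphic_intros hP hQ hden) auto
  have holB: "Bt holomorphic_on ball 0 1"
    unfolding Bt_def B_def using den_nz
    by (intro holomorphic_intros hP hQ hden) auto
  have GB: "(cmod (G w))^2 + (cmod (Bt w))^2 = ((cmod (P (w+l0)))^2 + (cmod (Q (w+l0)))^2) / X w ^ k" for w
    unfolding G_def Bt_def norm_divide power_divide den_norm AB[symmetric] by (simp add: add_divide_distrib)
  have bnd3: "(cmod (G w))^2 + (cmod (Bt w))^2 \<le> 3 * a^k" if w: "cmod w \<le> R" for w
  proof -
    have w1: "cmod w \<le> 1" using w Rh by simp
    have Xp: "0 < X w" using Xpos[OF w1] .
    have "(cmod w)^2 \<le> R^2" using w by (simp add: power_mono)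
    have X12: "1/2 \<le> X w"
    proof -
      have "3/4 \<le> 1 - cmod w / 2" using w Rh by simp
      then have "(3/4)^2 \<le> (1 - cmod w / 2)^2" by (intro power_mono) auto
      then show ?thesis using Xlo[OF w1] by (simp add: power2_eq_square)
    qed
    define Y where "Y = (cmod w)^2 / a^2 / X w"
    have Y0: "0 \<le> Y" unfolding Y_def using Xp by simp
    have Yk: "Y \<le> 1 / real k"
    proof -
      have "1 \<le> a^2" using a1 by (simp add: one_le_power)
      then have "(cmod w)^2 * 1 \<le> (cmod w)^2 * a^2" by (intro mult_left_mono) auto
      then have "(cmod w)^2 / a^2 \<le> (cmod w)^2" using a1 by (simp add: divide_le_eq)
      also have "\<dots> \<le> 1 / (2 * real k)" using \<open>(cmod w)^2 \<le> R^2\<close> RR by simp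
      finally have "(cmod w)^2 / a^2 \<le> 1 / (2 * real k)" .
      then have "(cmod w)^2 / a^2 / X w \<le> (1 / (2 * real k)) / X w" by (rule divide_right_mono) (use Xp in simp)
      then have "Y \<le> (1 / (2 * real k)) / X w" unfolding Y_def .
      also have "\<dots> \<le> (1 / (2 * real k)) / (1/2)" using X12 kpos by (intro divide_left_mono) auto
      finally show ?thesis by simp
    qed
    have "(cmod (G w))^2 + (cmod (Bt w))^2 \<le> (1 + (cmod (w + l0))^2)^k / X w ^ k"
      unfolding GB using upb[of "w + l0"] Xp by (simp add: divide_right_mono)
    also have "\<dots> = ((1 + (cmod (w + l0))^2) / X w)^k" by (simp add: power_divide)
    also have "(1 + (cmod (w + l0))^2) / X w = a * (1 + Y)"
      unfolding wid Y_def using Xp by (simp add: field_simps)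
    also have "(a * (1 + Y))^k = a^k * (1 + Y)^k" by (simp add: power_mult_distrib)
    also have "\<dots> \<le> a^k * exp 1"
    proof -
      have "(1 + Y)^k \<le> (exp (1 / real k))^k"
        using Y0 Yk by (intro power_mono) (auto intro: order_trans[OF _ exp_ge_add_one_self])
      also have "\<dots> = exp 1" using kpos by (simp add: exp_of_nat_mult[symmetric])
      finally show ?thesis using a1 by (simp add: mult_left_mono)
    qed
    also have "\<dots> \<le> 3 * a^k" using exp_le a1 by (simp add: mult_right_mono mult.commute)
    finally show ?thesis .
  qed
  have Gb: "cmod (G w) \<le> 2 * s" and Bb: "cmod (Bt w) \<le> 2 * s" if "cmod w \<le> R" for w
  proof -
    have e: "3 * a^k \<le> (2 * s)^2" using ss s1 a1 by (simp add: power_mult_distrib)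
    have "0 \<le> (cmod (G w))^2" "0 \<le> (cmod (Bt w))^2" by simp_all
    then have h1: "(cmod (G w))^2 \<le> (2 * s)^2" and h2: "(cmod (Bt w))^2 \<le> (2 * s)^2"
      using bnd3[OF that] e by linarith+
    show "cmod (G w) \<le> 2 * s" by (rule power2_le_imp_le[OF h1]) (use s1 in simp)
    show "cmod (Bt w) \<le> 2 * s" by (rule power2_le_imp_le[OF h2]) (use s1 in simp)
  qed
  have A0: "A l0 = of_real g0"
  proof -
    have "cnj P0 * P0 + cnj Q0 * Q0 = of_real (g0^2)"
      unfolding g0sq of_real_add complex_norm_square by (simp add: mult.commute)
    then show ?thesis unfolding A_def P0_def[symmetric] Q0_def[symmetric] using g0pos
      by (simp add: power2_eq_square)
  qed
  have den0: "den 0 = 1" unfolding den_def u_def by simp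
  have G0: "G 0 = of_real g0" unfolding G_def den0 using A0 by simp
  have Bt0: "Bt 0 = 0" unfolding Bt_def B_def den0 by (simp add: P0_def Q0_def mult.commute)
  have dB: "((\<lambda>w. B (w + l0)) has_field_derivative 0) (at 0)"
  proof -
    have "((\<lambda>w. P (w + l0)) has_field_derivative P1) (at 0)" using dP DERIV_shift[of P P1 0 l0] by simp
    moreover have "((\<lambda>w. Q (w + l0)) has_field_derivative Q1) (at 0)" using dQ DERIV_shift[of Q Q1 0 l0] by simp
    ultimately have "((\<lambda>w. B (w + l0)) has_field_derivative (Q0 * P1 - P0 * Q1) / of_real g0) (at 0)"
      unfolding B_def using g0pos by (intro derivative_eq_intros) auto
    moreover have "Q0 * P1 - P0 * Q1 = 0" using crit unfolding P0_def Q0_def by (simp add: mult.commute)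
    ultimately show ?thesis by simp
  qed
  have dden: "(den has_field_derivative deriv den 0) (at 0)"
    using hden[of UNIV] by (auto intro!: DERIV_deriv_iff_field_differentiable[THEN iffD2] holomorphic_on_imp_differentiable_at)
  have dBt: "deriv Bt 0 = 0"
  proof -
    have "((\<lambda>w. B (w + l0) / den w) has_field_derivative (0 * den 0 - B (0 + l0) * deriv den 0) / (den 0 * den 0)) (at 0)"
      by (rule DERIV_divide[OF dB dden]) (simp add: den0)
    moreover have "B (0 + l0) = 0" using Bt0 unfolding Bt_def den0 by simp
    ultimately have "(Bt has_field_derivative 0) (at 0)" unfolding Bt_def[abs_def] by simp
    then show ?thesis by (rule DERIV_imp_deriv)
  qed
  define \<rho> where "\<rho> = R / 10"
  have r0: "0 < \<rho>" unfolding \<rho>_def using R0 by simp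
  have Btsmall: "cmod (Bt w) \<le> s / 45" if "cmod w \<le> \<rho>" for w
  proof -
    have "cmod (Bt w) \<le> (2 * s) * (1/10)^2 / (1 - 1/10)"
    proof (rule taylor_bound[OF holB _ R0])
      show "R < 1" using Rh by simp
      show "cmod (Bt x) \<le> 2 * s" if "cmod x = R" for x using Bb that by simp
      show "(deriv ^^ j) Bt 0 = 0" if "j < 2" for j
        using that Bt0 dBt by (cases j) (auto simp: less_Suc_eq)
      show "cmod w \<le> 1/10 * R" using that \<rho>_def by simp
    qed auto
    then show ?thesis by (simp add: power2_eq_square)
  qed
  have Gclose: "cmod (G w - of_real g0) \<le> s / 3" if "cmod w \<le> \<rho>" for w
  proof -
    have "cmod ((\<lambda>w. G w - of_real g0) w) \<le> (3 * s) * (1/10)^1 / (1 - 1/10)"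
    proof (rule taylor_bound[where f="\<lambda>w. G w - of_real g0", OF _ _ R0])
      show "(\<lambda>w. G w - of_real g0) holomorphic_on ball 0 1" using holG by (intro holomorphic_intros)
      show "R < 1" using Rh by simp
      show "cmod (G x - of_real g0) \<le> 3 * s" if "cmod x = R" for x
        using Gb[of x] that g0up g0pos norm_triangle_ineq4[of "G x" "of_real g0"] by simp
      show "(deriv ^^ j) (\<lambda>w. G w - of_real g0) 0 = 0" if "j < 1" for j
        using that G0 by simp
      show "cmod w \<le> 1/10 * R" using that \<rho>_def by simp
    qed auto
    then show ?thesis by simp
  qed
  have Gnz: "G w \<noteq> 0" if "cmod w \<le> \<rho>" for w
  proof
    assume "G w = 0"
    then have "g0 \<le> s / 3" using Gclose[OF that] g0pos by simp
    moreover have "(1/3) * s < \<eta> * s" using eta s1 by (intro mult_strict_right_mono) auto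
    ultimately show False using g0lo by linarith
  qed
  obtain w where wr: "cmod w = \<rho>" and wG: "cmod (G w) \<le> g0"
    using min_modulus[OF holG _ r0 Gnz] G0 g0pos Rh \<rho>_def by auto
  have w1: "cmod w \<le> 1" using wr \<rho>_def Rh by simp
  have Xp: "0 < X w" using Xpos[OF w1] .
  have rh: "\<rho> \<le> 1/20" using Rh \<rho>_def by simp
  have kr: "real k * \<rho>^2 = 1/200" unfolding \<rho>_def using RR kpos by (simp add: power_divide)
  define C where "C = a^k * X w ^ k"
  have C0: "0 < C" unfolding C_def using a1 Xp by simp
  define Z where "Z = \<rho>^2 / a^2 / X w"
  have Z0: "0 \<le> Z" unfolding Z_def using Xp by simp
  have up: "(cmod (P (w + l0)))^2 + (cmod (Q (w + l0)))^2 \<le> C * (1 + 1/2025)"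
  proof -
    have "(cmod (P (w + l0)))^2 + (cmod (Q (w + l0)))^2 = X w ^ k * ((cmod (G w))^2 + (cmod (Bt w))^2)"
      unfolding GB using Xp by simp
    also have "(cmod (G w))^2 \<le> a^k"
    proof -
      have "(cmod (G w))^2 \<le> g0^2" using wG by (intro power_mono) auto
      also have "\<dots> \<le> s^2" using g0up g0pos by (intro power_mono) auto
      finally show ?thesis using ss by simp
    qed
    also have "(cmod (Bt w))^2 \<le> a^k / 2025"
    proof -
      have "(cmod (Bt w))^2 \<le> (s/45)^2" using Btsmall[of w] wr by (intro power_mono) auto
      then show ?thesis using ss by (simp add: power_divide)
    qed
    finally show ?thesis unfolding C_def using Xp a1
      by (simp add: mult_left_mono algebra_simps)
  qed
  have lo: "\<eta>^2 * (C * (1 + real k * Z)) \<le> (cmod (P (w + l0)))^2 + (cmod (Q (w + l0)))^2"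
  proof -
    have "1 + (cmod (w + l0))^2 = a * X w * (1 + Z)"
      unfolding wid Z_def using Xp a1 wr by (simp add: field_simps)
    then have "(1 + (cmod (w + l0))^2)^k = C * (1 + Z)^k" unfolding C_def by (simp add: power_mult_distrib)
    moreover have "1 + real k * Z \<le> (1 + Z)^k" using Bernoulli_inequality[of Z k] Z0 by simp
    ultimately have "C * (1 + real k * Z) \<le> (1 + (cmod (w + l0))^2)^k" using C0 by simp
    then have "\<eta>^2 * (C * (1 + real k * Z)) \<le> \<eta>^2 * (1 + (cmod (w + l0))^2)^k"
      by (intro mult_left_mono) auto
    then show ?thesis using lowb[of "w + l0"] by linarith
  qed
  have main: "\<eta>^2 * (1 + real k * Z) \<le> 1 + 1/2025"
  proof -
    have "C * (\<eta>^2 * (1 + real k * Z)) \<le> C * (1 + 1/2025)"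
      using order_trans[OF lo up] by (metis mult.left_commute)
    then show ?thesis using C0 by (rule mult_le_cancel_left_pos[THEN iffD1, rotated])
  qed
  have Xh: "X w \<le> 106/100"
  proof -
    have "X w \<le> (1 + cmod w / 2)^2" by (rule Xhi)
    also have "\<dots> \<le> (1 + 1/40)^2" using wr rh by (intro power_mono) auto
    finally show ?thesis by (simp add: power2_eq_square)
  qed
  have kZ: "1/848 \<le> real k * Z"
  proof -
    have "real k * Z = (real k * \<rho>^2) / (a^2 * X w)" unfolding Z_def by (simp add: field_simps)
    also have "\<dots> = (1/200) / (a^2 * X w)" unfolding kr ..
    also have "(1/200) / (4 * (106/100)) \<le> (1/200) / (a^2 * X w)"
    proof (rule divide_left_mono)
      have "a^2 \<le> 2^2" using a2 a1 by (intro power_mono) auto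
      then have "a^2 \<le> 4" by simp
      then show "a^2 * X w \<le> 4 * (106/100)" using Xh Xp by (intro mult_mono) auto
      show "0 < (4 * (106/100)) * (a^2 * X w)" using a1 Xp by simp
    qed simp
    finally show ?thesis by simp
  qed
  have e2: "9998/10000 \<le> \<eta>^2"
  proof -
    have "(9999/10000)^2 \<le> \<eta>^2" using eta by (intro power_mono) auto
    then show ?thesis by (simp add: power2_eq_square)
  qed
  have "(9998/10000) * (1 + 1/848) \<le> \<eta>^2 * (1 + real k * Z)"
    using e2 kZ by (intro mult_mono) auto
  with main show False by simp
qed


lemma hom_scale:
  fixes p :: "complex \<Rightarrow> complex \<Rightarrow> complex" and c :: "nat \<Rightarrow> complex" and t z1 z2 :: complex
  assumes "\<forall>z1 z2. p z1 z2 = (\<Sum>j\<le>k. c j * z1 ^ j * z2 ^ (k - j))"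
  shows "p (t * z1) (t * z2) = t^k * p z1 z2"
proof -
  have "p (t * z1) (t * z2) = (\<Sum>j\<le>k. c j * (t * z1) ^ j * (t * z2) ^ (k - j))" using assms by blast
  also have "\<dots> = (\<Sum>j\<le>k. t^k * (c j * z1 ^ j * z2 ^ (k - j)))"
  proof (rule sum.cong[OF refl])
    fix j assume "j \<in> {..k}"
    then have jk: "j \<le> k" by simp
    have e: "t^j * t^(k-j) = t^k" using jk by (simp flip: power_add)
    have "c j * (t * z1) ^ j * (t * z2) ^ (k - j) = (t^j * t^(k-j)) * (c j * z1 ^ j * z2 ^ (k - j))"
      by (simp only: power_mult_distrib mult_ac)
    then show "c j * (t * z1) ^ j * (t * z2) ^ (k - j) = t^k * (c j * z1 ^ j * z2 ^ (k - j))"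
      by (simp only: e)
  qed
  also have "\<dots> = t^k * p z1 z2" using assms by (simp add: sum_distrib_left)
  finally show ?thesis .
qed

lemma hom_swap:
  assumes "hom_poly2 k p"
  shows "hom_poly2 k (\<lambda>z1 z2. p z2 z1)"
proof -
  obtain c where c: "\<forall>z1 z2. p z1 z2 = (\<Sum>j\<le>k. c j * z1 ^ j * z2 ^ (k - j))"
    using assms unfolding hom_poly2_def by blast
  have E: "p z2 z1 = (\<Sum>j\<le>k. c (k - j) * z1 ^ j * z2 ^ (k - j))" for z1 z2
  proof -
    have "p z2 z1 = (\<Sum>j\<le>k. c j * z2 ^ j * z1 ^ (k - j))" using c by simp
    also have "\<dots> = (\<Sum>j\<le>k. c (k - j) * z1 ^ j * z2 ^ (k - j))"
      by (rule sum.reindex_bij_witness[where i="\<lambda>j. k - j" and j="\<lambda>j. k - j"]) (auto simp: mult_ac)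
    finally show ?thesis .
  qed
  show ?thesis unfolding hom_poly2_def by (rule exI[of _ "\<lambda>j. c (k - j)"]) (use E in auto)
qed

lemma sphere_to_plane:
  assumes hp: "hom_poly2 k p" and hq: "hom_poly2 k q" and eta0: "0 < \<eta>"
    and sph: "\<forall>z1 z2. norm2 z1 z2 = 1 \<longrightarrow>
              \<eta> \<le> norm2 (p z1 z2) (q z1 z2) \<and> norm2 (p z1 z2) (q z1 z2) \<le> 1"
  shows "\<eta>^2 * (1 + (cmod x)^2)^k \<le> (cmod (p x 1))^2 + (cmod (q x 1))^2"
    and "(cmod (p x 1))^2 + (cmod (q x 1))^2 \<le> (1 + (cmod x)^2)^k"
proof -
  obtain c where c: "\<forall>z1 z2. p z1 z2 = (\<Sum>j\<le>k. c j * z1 ^ j * z2 ^ (k - j))"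
    using hp unfolding hom_poly2_def by blast
  obtain d where d: "\<forall>z1 z2. q z1 z2 = (\<Sum>j\<le>k. d j * z1 ^ j * z2 ^ (k - j))"
    using hq unfolding hom_poly2_def by blast
  define \<sigma> where "\<sigma> = sqrt (1 + (cmod x)^2)"
  have s0: "0 < \<sigma>" unfolding \<sigma>_def by (simp add: add_pos_nonneg)
  have ss: "\<sigma>^2 = 1 + (cmod x)^2" unfolding \<sigma>_def by (simp add: add_nonneg_nonneg)
  define t where "t = complex_of_real (1 / \<sigma>)"
  have n1: "norm2 (t * x) (t * 1) = 1"
  proof -
    have "(cmod (t * x))^2 + (cmod (t * 1))^2 = ((cmod x)^2 + 1) / \<sigma>^2"
      unfolding t_def using s0 by (simp add: norm_divide norm_mult power_divide add_divide_distrib)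
    also have "\<dots> = 1"
    proof -
      have "0 < 1 + (cmod x)^2" by (simp add: add_pos_nonneg)
      then show ?thesis using ss by (simp add: add.commute)
    qed
    finally show ?thesis unfolding norm2_def by simp
  qed
  have pe: "p (t * x) (t * 1) = t^k * p x 1" by (rule hom_scale[OF c])
  have qe: "q (t * x) (t * 1) = t^k * q x 1" by (rule hom_scale[OF d])
  have nt: "cmod (t^k) = 1 / \<sigma>^k" unfolding t_def of_real_power[symmetric] norm_of_real using s0 by (simp add: power_divide)
  have N: "(norm2 (p (t * x) (t * 1)) (q (t * x) (t * 1)))^2 = ((cmod (p x 1))^2 + (cmod (q x 1))^2) / (1 + (cmod x)^2)^k"
  proof -
    have "(norm2 (p (t * x) (t * 1)) (q (t * x) (t * 1)))^2 = (cmod (t^k * p x 1))^2 + (cmod (t^k * q x 1))^2"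
      unfolding norm2_def pe qe by simp
    also have "\<dots> = ((cmod (p x 1))^2 + (cmod (q x 1))^2) / (\<sigma>^2)^k"
    proof -
      have "(\<sigma>^2)^k = (\<sigma>^k)^2" by (simp add: power_mult[symmetric] mult.commute)
      moreover have "(cmod (t^k * y))^2 = (cmod y)^2 / (\<sigma>^k)^2" for y
        unfolding norm_mult nt by (simp add: power_mult_distrib power_divide)
      ultimately show ?thesis by (simp add: add_divide_distrib)
    qed
    finally show ?thesis unfolding ss .
  qed
  have W: "0 < (1 + (cmod x)^2)^k" by (simp add: add_pos_nonneg)
  from sph n1 have b: "\<eta> \<le> norm2 (p (t * x) (t * 1)) (q (t * x) (t * 1))" "norm2 (p (t * x) (t * 1)) (q (t * x) (t * 1)) \<le> 1"
    by blast+
  have nn: "0 \<le> norm2 (p (t * x) (t * 1)) (q (t * x) (t * 1))" unfolding norm2_def by simp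
  have "\<eta>^2 \<le> (norm2 (p (t * x) (t * 1)) (q (t * x) (t * 1)))^2" using b(1) eta0 by (intro power_mono) auto
  then show "\<eta>^2 * (1 + (cmod x)^2)^k \<le> (cmod (p x 1))^2 + (cmod (q x 1))^2"
    unfolding N using W by (simp add: le_divide_eq)
  have "(norm2 (p (t * x) (t * 1)) (q (t * x) (t * 1)))^2 \<le> 1^2" using b(2) nn by (intro power_mono) auto
  then show "(cmod (p x 1))^2 + (cmod (q x 1))^2 \<le> (1 + (cmod x)^2)^k"
    unfolding N using W by (simp add: divide_le_eq)
qed



lemma main_poly:
  fixes Pp Qp :: "complex poly" and k :: nat and \<eta> :: real
  assumes lowb: "\<And>z. \<eta>^2 * (1 + (cmod z)^2)^k \<le> (cmod (poly Pp z))^2 + (cmod (poly Qp z))^2"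
    and upb: "\<And>z. (cmod (poly Pp z))^2 + (cmod (poly Qp z))^2 \<le> (1 + (cmod z)^2)^k"
    and k2: "2 \<le> k" and eta: "9999/10000 < \<eta>"
    and root: "cmod x \<le> 1" "poly (Pp * pderiv Qp - pderiv Pp * Qp) x = 0"
  shows False
proof (rule main_local[of "poly Pp" "poly Qp" \<eta> k x "poly (pderiv Pp) x" "poly (pderiv Qp) x"])
  show "poly Pp holomorphic_on UNIV" "poly Qp holomorphic_on UNIV"
    using poly_holomorphic_on[of "\<lambda>z. z" UNIV] by (auto intro!: holomorphic_intros)
  show "poly Pp x * poly (pderiv Qp) x = poly (pderiv Pp) x * poly Qp x"
    using root(2) by (simp add: mult.commute)
qed (use assms in auto)

lemma swap_crit_id:
  fixes Pp Qp Psp Qsp :: "complex poly" and \<mu> :: complex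
  assumes relP: "\<And>x. x \<noteq> 0 \<Longrightarrow> poly Psp x = x^k * poly Pp (inverse x)"
    and relQ: "\<And>x. x \<noteq> 0 \<Longrightarrow> poly Qsp x = x^k * poly Qp (inverse x)"
    and mu: "\<mu> \<noteq> 0"
  shows "poly (Psp * pderiv Qsp - pderiv Psp * Qsp) \<mu>
         = \<mu>^k * \<mu>^k * (- (inverse \<mu> ^ 2)) * poly (Pp * pderiv Qp - pderiv Pp * Qp) (inverse \<mu>)"
proof -
  have gen: "poly (pderiv Rsp) \<mu> = of_nat k * \<mu>^(k-1) * poly Rp (inverse \<mu>) + \<mu>^k * (poly (pderiv Rp) (inverse \<mu>) * (- (inverse \<mu> ^ 2)))"
    if rel: "\<And>x. x \<noteq> 0 \<Longrightarrow> poly Rsp x = x^k * poly Rp (inverse x)" for Rsp Rp :: "complex poly"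
  proof -
    have d1: "((\<lambda>x. poly Rp (inverse x)) has_field_derivative poly (pderiv Rp) (inverse \<mu>) * (- (inverse \<mu> ^ 2))) (at \<mu>)"
      using DERIV_chain2[OF poly_DERIV DERIV_inverse[OF mu]] by (simp add: power2_eq_square)
    have d2: "((\<lambda>x. x^k * poly Rp (inverse x)) has_field_derivative
         of_nat k * \<mu>^(k-1) * poly Rp (inverse \<mu>) + \<mu>^k * (poly (pderiv Rp) (inverse \<mu>) * (- (inverse \<mu> ^ 2)))) (at \<mu>)"
      using DERIV_mult[OF DERIV_power[OF DERIV_ident, of k \<mu> UNIV] d1] by (simp add: mult.commute)
    have d3: "((poly Rsp) has_field_derivative
         of_nat k * \<mu>^(k-1) * poly Rp (inverse \<mu>) + \<mu>^k * (poly (pderiv Rp) (inverse \<mu>) * (- (inverse \<mu> ^ 2)))) (at \<mu>)"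
      by (rule has_field_derivative_transform_within_open[OF d2, of "- {0}"]) (use mu rel in auto)
    show ?thesis using DERIV_unique[OF poly_DERIV[of Rsp \<mu>] d3] .
  qed
  have eP: "poly (pderiv Psp) \<mu> = of_nat k * \<mu>^(k-1) * poly Pp (inverse \<mu>) + \<mu>^k * (poly (pderiv Pp) (inverse \<mu>) * (- (inverse \<mu> ^ 2)))"
    by (rule gen[OF relP])
  have eQ: "poly (pderiv Qsp) \<mu> = of_nat k * \<mu>^(k-1) * poly Qp (inverse \<mu>) + \<mu>^k * (poly (pderiv Qp) (inverse \<mu>) * (- (inverse \<mu> ^ 2)))"
    by (rule gen[OF relQ])
  show ?thesis unfolding poly_diff poly_mult eP eQ relP[OF mu] relQ[OF mu]
    by (simp add: algebra_simps)
qed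

lemma exists_root:
  fixes D Ds :: "complex poly" and k :: nat
  assumes k2: "2 \<le> k"
    and rel: "\<And>\<mu>. \<mu> \<noteq> 0 \<Longrightarrow> poly Ds \<mu> = \<mu>^k * \<mu>^k * (- (inverse \<mu> ^ 2)) * poly D (inverse \<mu>)"
  shows "(\<exists>x. cmod x \<le> 1 \<and> poly D x = 0) \<or> (\<exists>x. cmod x \<le> 1 \<and> poly Ds x = 0)"
proof (cases "constant (poly D)")
  case False
  then obtain z where z: "poly D z = 0" using fundamental_theorem_of_algebra by blast
  show ?thesis
  proof (cases "cmod z \<le> 1")
    case True then show ?thesis using z by blast
  next
    case False
    then have z0: "z \<noteq> 0" by auto
    have "poly Ds (inverse z) = 0" using rel[of "inverse z"] z0 z by simp
    moreover have "cmod (inverse z) \<le> 1"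
    proof -
      have "1 < cmod z" using False by simp
      then have "inverse (cmod z) < inverse 1" by (intro less_imp_inverse_less) auto
      then show ?thesis by (simp add: norm_inverse)
    qed
    ultimately show ?thesis by blast
  qed
next
  case True
  then have cst: "poly D x = poly D 0" for x unfolding constant_def by blast
  show ?thesis
  proof (cases "poly D 0 = 0")
    case True then show ?thesis by (intro disjI1 exI[of _ 0]) simp
  next
    case False
    define d where "d = poly D 0"
    define E where "E = Ds + monom d (2*k-2)"
    have Ez: "poly E \<mu> = 0" if mu: "\<mu> \<noteq> 0" for \<mu>
    proof -
      have e: "(2*k-2)+2 = k+k" using k2 by simp
      have "\<mu>^k * \<mu>^k = \<mu>^(2*k-2) * \<mu>^2" by (simp only: power_add[symmetric] e)
      then have "\<mu>^k * \<mu>^k * inverse \<mu> ^ 2 = \<mu>^(2*k-2)" using mu by (simp add: power_inverse field_simps)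
      then show ?thesis unfolding E_def poly_add poly_monom rel[OF mu] cst[of "inverse \<mu>"] d_def[symmetric]
        by (simp add: algebra_simps)
    qed
    have "E = 0"
    proof (rule ccontr)
      assume "E \<noteq> 0"
      then have "finite {x. poly E x = 0}" by (rule poly_roots_finite)
      moreover have "- {0} \<subseteq> {x. poly E x = 0}" using Ez by auto
      ultimately have "finite (- {0::complex})" by (rule finite_subset[rotated])
      then have "finite (insert 0 (- {0::complex}))" by simp
      moreover have "insert 0 (- {0::complex}) = UNIV" by auto
      ultimately show False using infinite_UNIV_char_0 by metis
    qed
    then have "poly E 0 = 0" by simp
    moreover have "(0::complex) ^ (2 * k - 2) = 0" using k2 by simp
    ultimately have "poly Ds 0 = 0" unfolding E_def by (simp add: poly_monom)
    then show ?thesis by (intro disjI2 exI[of _ 0]) simp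
  qed
qed

theorem proposition3:
  shows "\<exists>\<eta>0::real. \<eta>0 < 1 \<and>
    (\<forall>\<eta>::real. \<eta> > 0 \<longrightarrow>
      (\<exists>K::nat. \<forall>k\<ge>K. \<exists>p q. hom_poly2 k p \<and> hom_poly2 k q \<and>
          (\<forall>z1 z2. norm2 z1 z2 = 1 \<longrightarrow>
              \<eta> \<le> norm2 (p z1 z2) (q z1 z2) \<and> norm2 (p z1 z2) (q z1 z2) \<le> 1))
      \<longrightarrow> \<eta> \<le> \<eta>0)"
proof (intro exI[of _ "9999/10000"] conjI allI impI)
  show "(9999/10000::real) < 1" by simp
  fix \<eta> :: real
  assume eta0: "\<eta> > 0"
    and H: "\<exists>K::nat. \<forall>k\<ge>K. \<exists>p q. hom_poly2 k p \<and> hom_poly2 k q \<and>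
          (\<forall>z1 z2. norm2 z1 z2 = 1 \<longrightarrow>
              \<eta> \<le> norm2 (p z1 z2) (q z1 z2) \<and> norm2 (p z1 z2) (q z1 z2) \<le> 1)"
  show "\<eta> \<le> 9999/10000"
  proof (rule ccontr)
    assume "\<not> \<eta> \<le> 9999/10000"
    then have eta: "9999/10000 < \<eta>" by simp
    obtain K where HK: "\<forall>k\<ge>K. \<exists>p q. hom_poly2 k p \<and> hom_poly2 k q \<and>
          (\<forall>z1 z2. norm2 z1 z2 = 1 \<longrightarrow>
              \<eta> \<le> norm2 (p z1 z2) (q z1 z2) \<and> norm2 (p z1 z2) (q z1 z2) \<le> 1)"
      using H by blast
    define k where "k = max K 2"
    have k2: "2 \<le> k" and kK: "K \<le> k" by (simp_all add: k_def)
    obtain p q where hp: "hom_poly2 k p" and hq: "hom_poly2 k q"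
      and sph: "\<forall>z1 z2. norm2 z1 z2 = 1 \<longrightarrow>
              \<eta> \<le> norm2 (p z1 z2) (q z1 z2) \<and> norm2 (p z1 z2) (q z1 z2) \<le> 1"
      using HK kK by blast
    obtain c where c: "\<forall>z1 z2. p z1 z2 = (\<Sum>j\<le>k. c j * z1 ^ j * z2 ^ (k - j))"
      using hp unfolding hom_poly2_def by blast
    obtain d where d: "\<forall>z1 z2. q z1 z2 = (\<Sum>j\<le>k. d j * z1 ^ j * z2 ^ (k - j))"
      using hq unfolding hom_poly2_def by blast
    define Pp where "Pp = (\<Sum>j\<le>k. monom (c j) j)"
    define Qp where "Qp = (\<Sum>j\<le>k. monom (d j) j)"
    define Psp where "Psp = (\<Sum>j\<le>k. monom (c j) (k - j))"
    define Qsp where "Qsp = (\<Sum>j\<le>k. monom (d j) (k - j))"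
    have ePp: "poly Pp x = p x 1" for x unfolding Pp_def poly_sum poly_monom using c by simp
    have eQp: "poly Qp x = q x 1" for x unfolding Qp_def poly_sum poly_monom using d by simp
    have ePsp: "poly Psp x = p 1 x" for x unfolding Psp_def poly_sum poly_monom using c by simp
    have eQsp: "poly Qsp x = q 1 x" for x unfolding Qsp_def poly_sum poly_monom using d by simp
    have sph': "\<forall>z1 z2. norm2 z1 z2 = 1 \<longrightarrow>
              \<eta> \<le> norm2 (p z2 z1) (q z2 z1) \<and> norm2 (p z2 z1) (q z2 z1) \<le> 1"
    proof (intro allI impI)
      fix z1 z2 :: complex assume "norm2 z1 z2 = 1"
      then have "norm2 z2 z1 = 1" unfolding norm2_def by (simp add: add.commute)
      then show "\<eta> \<le> norm2 (p z2 z1) (q z2 z1) \<and> norm2 (p z2 z1) (q z2 z1) \<le> 1" using sph by blast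
    qed
    have relP: "poly Psp x = x^k * poly Pp (inverse x)" if "x \<noteq> 0" for x
    proof -
      have "p (x * inverse x) (x * 1) = x^k * p (inverse x) 1" by (rule hom_scale[OF c])
      then show ?thesis unfolding ePsp ePp using that by simp
    qed
    have relQ: "poly Qsp x = x^k * poly Qp (inverse x)" if "x \<noteq> 0" for x
    proof -
      have "q (x * inverse x) (x * 1) = x^k * q (inverse x) 1" by (rule hom_scale[OF d])
      then show ?thesis unfolding eQsp eQp using that by simp
    qed
    have root: "(\<exists>x. cmod x \<le> 1 \<and> poly (Pp * pderiv Qp - pderiv Pp * Qp) x = 0) \<or>
                (\<exists>x. cmod x \<le> 1 \<and> poly (Psp * pderiv Qsp - pderiv Psp * Qsp) x = 0)"
      by (rule exists_root[OF k2 swap_crit_id[OF relP relQ]]) auto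
    then show False
    proof
      assume "\<exists>x. cmod x \<le> 1 \<and> poly (Pp * pderiv Qp - pderiv Pp * Qp) x = 0"
      then obtain x where x: "cmod x \<le> 1" "poly (Pp * pderiv Qp - pderiv Pp * Qp) x = 0" by blast
      show False
      proof (rule main_poly[OF _ _ k2 eta x])
        show "\<eta>^2 * (1 + (cmod z)^2)^k \<le> (cmod (poly Pp z))^2 + (cmod (poly Qp z))^2" for z
          unfolding ePp eQp by (rule sphere_to_plane(1)[OF hp hq eta0 sph])
        show "(cmod (poly Pp z))^2 + (cmod (poly Qp z))^2 \<le> (1 + (cmod z)^2)^k" for z
          unfolding ePp eQp by (rule sphere_to_plane(2)[OF hp hq eta0 sph])
      qed
    next
      assume "\<exists>x. cmod x \<le> 1 \<and> poly (Psp * pderiv Qsp - pderiv Psp * Qsp) x = 0"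
      then obtain x where x: "cmod x \<le> 1" "poly (Psp * pderiv Qsp - pderiv Psp * Qsp) x = 0" by blast
      show False
      proof (rule main_poly[OF _ _ k2 eta x])
        show "\<eta>^2 * (1 + (cmod z)^2)^k \<le> (cmod (poly Psp z))^2 + (cmod (poly Qsp z))^2" for z
          unfolding ePsp eQsp using sphere_to_plane(1)[OF hom_swap[OF hp] hom_swap[OF hq] eta0 sph'] by simp
        show "(cmod (poly Psp z))^2 + (cmod (poly Qsp z))^2 \<le> (1 + (cmod z)^2)^k" for z
          unfolding ePsp eQsp using sphere_to_plane(2)[OF hom_swap[OF hp] hom_swap[OF hq] eta0 sph'] by simp
      qed
    qed
  qed
qed

end
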